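(* Let $\Gamma$ be a single-player extensive-form game without absentmindedness. Then $$\mathrm{VoR}^{\mathrm{opt}}(\Gamma)\le\frac{u_1(\mathrm{opt}(\mathrm{pr}_1(\Gamma)))}{\max_{z\in\mathcal Z}\chi(z)u_1(z)}\le\max_{h\in\mathcal H_c}\beta(h),$$ where by convention $\max_{h\in\mathcal H_c}\beta(h)=1$ if $\mathcal H_c=\emptyset$.
   Context: A single-player extensive-form game consists of a finite rooted tree (nodes $\mathcal H$, leaves $\mathcal Z$, actions $A_h$); nonterminal nodes belong to Player 1 or to chance; $\mathcal H_c$ is the set of chance nodes, each with a fixed distribution $\mathbb P_c(\cdot\mid h)$ on $A_h$; Player 1 has utility $u_1:\mathcal Z\to\mathbb R_{\ge0}$ and a partition of its nodes into infosets with common action sets $A_I$. For a node $h$ with root-to-$h$ path $(h_0,\dots,h_{d-1})$ (excluding $h$), $\mathrm{obs}(h)=(i_k,I_k,a_k)_k$ lists the player at $h_k$ (1 or chance), its infoset and the action taken; $\mathrm{obs}_1(h)$ is the restriction to Player 1. The game has absentmindedness if some infoset appears more than once among the $I_k$ in $\mathrm{obs}(h)$ for some $h$. $\mathrm{pr}_1(\Gamma)$ has the same tree and utilities, each infoset partitioned into classes of $h\sim h'\iff\mathrm{obs}_1(h)=\mathrm{obs}_1(h')$. $u_1(\mathrm{opt}(\cdot))$ is the maximum expected utility over behavioral strategies; $\mathrm{VoR}^{\mathrm{opt}}(\Gamma)=u_1(\mathrm{opt}(\mathrm{pr}_1(\Gamma)))/u_1(\mathrm{opt}(\Gamma))$.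 Chance coefficient: $\chi(z)=\prod_{k:\,i_k=c}\mathbb P_c(a_k\mid h_k)$ over the chance nodes on the path to $z$ (and $\chi(z)=1$ if there are none). Branching factor: for $h\in\mathcal H_c$ and $a\in A_h$, let $H_{ha}$ be the set of chance nodes in the subtree rooted at the child of $h$ reached by $a$; $b_h(a)=1$ if $H_{ha}=\emptyset$, else $b_h(a)=\max_{h'\in H_{ha}}\beta(h')$; $\beta(h)=\sum_{a\in A_h}b_h(a)$ (defined recursively from the bottom of the tree). *)

theory Defs
  imports Complex_Main "HOL-Library.Sublist"
begin

text \<open>Nodes are histories (lists of actions
from the root); the tree is a finite prefix-closed set H of histories containing
the root [].\<close>

datatype player = P1 | Chance

definition acts :: "'a list set \<Rightarrow> 'a list \<Rightarrow> 'a set" where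
  "acts H h = {a. h @ [a] \<in> H}"

definition leaves :: "'a list set \<Rightarrow> 'a list set" where
  "leaves H = {h \<in> H. acts H h = {}}"

definition inner :: "'a list set \<Rightarrow> 'a list set" where
  "inner H = {h \<in> H. acts H h \<noteq> {}}"

definition chance_nodes :: "'a list set \<Rightarrow> ('a list \<Rightarrow> player) \<Rightarrow> 'a list set" where
  "chance_nodes H pl = {h \<in> inner H. pl h = Chance}"

definition p1_nodes :: "'a list set \<Rightarrow> ('a list \<Rightarrow> player) \<Rightarrow> 'a list set" where
  "p1_nodes H pl = {h \<in> inner H. pl h = P1}"

definition wf_game ::
  "'a list set \<Rightarrow> ('a list \<Rightarrow> player) \<Rightarrow> ('a list \<Rightarrow> 'i) \<Rightarrow> ('a list \<Rightarrow> 'a \<Rightarrow> real)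
   \<Rightarrow> ('a list \<Rightarrow> real) \<Rightarrow> bool" where
  "wf_game H pl iset pc u \<longleftrightarrow>
     finite H \<and> [] \<in> H \<and> (\<forall>h a. h @ [a] \<in> H \<longrightarrow> h \<in> H) \<and>
     (\<forall>h \<in> chance_nodes H pl. (\<forall>a \<in> acts H h. pc h a \<ge> 0) \<and> (\<Sum>a \<in> acts H h. pc h a) = 1) \<and>
     (\<forall>z \<in> leaves H. u z \<ge> 0) \<and>
     (\<forall>h \<in> p1_nodes H pl. \<forall>h' \<in> p1_nodes H pl. iset h = iset h' \<longrightarrow> acts H h = acts H h')"

definition strat ::
  "'a list set \<Rightarrow> ('a list \<Rightarrow> player) \<Rightarrow> ('a list \<Rightarrow> 'i) \<Rightarrow> ('i \<Rightarrow> 'a \<Rightarrow> real) \<Rightarrow> bool" where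
  "strat H pl iset \<sigma> \<longleftrightarrow>
     (\<forall>h \<in> p1_nodes H pl. (\<forall>a \<in> acts H h. \<sigma> (iset h) a \<ge> 0) \<and> (\<Sum>a \<in> acts H h. \<sigma> (iset h) a) = 1)"

definition reach ::
  "('a list \<Rightarrow> player) \<Rightarrow> ('a list \<Rightarrow> 'i) \<Rightarrow> ('a list \<Rightarrow> 'a \<Rightarrow> real) \<Rightarrow> ('i \<Rightarrow> 'a \<Rightarrow> real)
   \<Rightarrow> 'a list \<Rightarrow> real" where
  "reach pl iset pc \<sigma> h =
     (\<Prod>k<length h. if pl (take k h) = Chance then pc (take k h) (h ! k)
                     else \<sigma> (iset (take k h)) (h ! k))"

definition eu ::
  "'a list set \<Rightarrow> ('a list \<Rightarrow> player) \<Rightarrow> ('a list \<Rightarrow> 'i) \<Rightarrow> ('a list \<Rightarrow> 'a \<Rightarrow> real)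
   \<Rightarrow> ('a list \<Rightarrow> real) \<Rightarrow> ('i \<Rightarrow> 'a \<Rightarrow> real) \<Rightarrow> real" where
  "eu H pl iset pc u \<sigma> = (\<Sum>z \<in> leaves H. reach pl iset pc \<sigma> z * u z)"

definition opt_val ::
  "'a list set \<Rightarrow> ('a list \<Rightarrow> player) \<Rightarrow> ('a list \<Rightarrow> 'i) \<Rightarrow> ('a list \<Rightarrow> 'a \<Rightarrow> real)
   \<Rightarrow> ('a list \<Rightarrow> real) \<Rightarrow> real" where
  "opt_val H pl iset pc u = Sup (eu H pl iset pc u ` {\<sigma>. strat H pl iset \<sigma>})"

definition obs1 :: "('a list \<Rightarrow> player) \<Rightarrow> ('a list \<Rightarrow> 'i) \<Rightarrow> 'a list \<Rightarrow> ('i \<times> 'a) list" where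
  "obs1 pl iset h = map (\<lambda>k. (iset (take k h), h ! k)) (filter (\<lambda>k. pl (take k h) = P1) [0..<length h])"

text \<open>pr_1(Gamma): same tree; infosets refined by obs_1.\<close>
definition pr1_inf :: "('a list \<Rightarrow> player) \<Rightarrow> ('a list \<Rightarrow> 'i) \<Rightarrow> 'a list \<Rightarrow> 'i \<times> ('i \<times> 'a) list" where
  "pr1_inf pl iset h = (iset h, obs1 pl iset h)"

definition no_absentmindedness :: "'a list set \<Rightarrow> ('a list \<Rightarrow> player) \<Rightarrow> ('a list \<Rightarrow> 'i) \<Rightarrow> bool" where
  "no_absentmindedness H pl iset \<longleftrightarrow>
     (\<forall>h \<in> H. \<forall>k < length h. \<forall>l < length h.
        k \<noteq> l \<and> pl (take k h) = P1 \<and> pl (take l h) = P1 \<longrightarrow> iset (take k h) \<noteq> iset (take l h))"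

definition VoR_opt ::
  "'a list set \<Rightarrow> ('a list \<Rightarrow> player) \<Rightarrow> ('a list \<Rightarrow> 'i) \<Rightarrow> ('a list \<Rightarrow> 'a \<Rightarrow> real)
   \<Rightarrow> ('a list \<Rightarrow> real) \<Rightarrow> real" where
  "VoR_opt H pl iset pc u = opt_val H pl (pr1_inf pl iset) pc u / opt_val H pl iset pc u"

definition chi :: "('a list \<Rightarrow> player) \<Rightarrow> ('a list \<Rightarrow> 'a \<Rightarrow> real) \<Rightarrow> 'a list \<Rightarrow> real" where
  "chi pl pc z = (\<Prod>k \<in> {k. k < length z \<and> pl (take k z) = Chance}. pc (take k z) (z ! k))"

text \<open>Branching factor, computed by bottom-up recursion; the recursion is written with
an explicit fuel parameter n (each recursive call goes to a strictly deeper chance node).\<close>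
primrec beta_fuel :: "'a list set \<Rightarrow> ('a list \<Rightarrow> player) \<Rightarrow> nat \<Rightarrow> 'a list \<Rightarrow> nat" where
  "beta_fuel H pl 0 h = 0"
| "beta_fuel H pl (Suc n) h =
     (\<Sum>a \<in> acts H h.
        (let S = {h' \<in> chance_nodes H pl. prefix (h @ [a]) h'}
         in if S = {} then 1 else Max (beta_fuel H pl n ` S)))"

text \<open>Fuel card H suffices: all histories in H have length < card H for a prefix-closed H.\<close>
definition beta :: "'a list set \<Rightarrow> ('a list \<Rightarrow> player) \<Rightarrow> 'a list \<Rightarrow> nat" where
  "beta H pl h = beta_fuel H pl (card H) h"

definition max_beta :: "'a list set \<Rightarrow> ('a list \<Rightarrow> player) \<Rightarrow> nat" where
  "max_beta H pl = (if chance_nodes H pl = {} then 1 else Max (beta H pl ` chance_nodes H pl))"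

end

theory Submission
  imports Defs
begin

locale gm =
  fixes H :: "'a list set" and pl :: "'a list \<Rightarrow> player" and pc :: "'a list \<Rightarrow> 'a \<Rightarrow> real"
    and u :: "'a list \<Rightarrow> real"
  assumes fin: "finite H" and root: "[] \<in> H" and closed: "\<And>h a. h @ [a] \<in> H \<Longrightarrow> h \<in> H"
    and pc_nn: "\<And>h a. h \<in> chance_nodes H pl \<Longrightarrow> a \<in> acts H h \<Longrightarrow> pc h a \<ge> 0"
    and pc_sum: "\<And>h. h \<in> chance_nodes H pl \<Longrightarrow> (\<Sum>a\<in>acts H h. pc h a) = 1"
    and u_nn: "\<And>z. z \<in> leaves H \<Longrightarrow> u z \<ge> 0"
begin

lemma prefix_closed: "h @ t \<in> H \<Longrightarrow> h \<in> H"
proof (induction t rule: rev_induct)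
  case Nil then show ?case by simp
next
  case (snoc x xs) then show ?case using closed[of "h @ xs" x] by simp
qed

lemma prefix_in: "z \<in> H \<Longrightarrow> prefix h z \<Longrightarrow> h \<in> H"
  by (auto simp: prefix_def intro: prefix_closed)

lemma take_in: "z \<in> H \<Longrightarrow> take k z \<in> H"
  using prefix_in take_is_prefix by blast

lemma len_lt: assumes "h \<in> H" shows "length h < card H"
proof -
  have inj: "inj_on (\<lambda>k. take k h) {..length h}"
  proof (rule inj_onI)
    fix k k' assume "k \<in> {..length h}" "k' \<in> {..length h}" "take k h = take k' h"
    then show "k = k'" by (metis atMost_iff length_take min.absorb2)
  qed
  have "(\<lambda>k. take k h) ` {..length h} \<subseteq> H" using take_in assms by auto
  from card_mono[OF fin this] card_image[OF inj] show ?thesis by simp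
qed

lemma acts_fin: "finite (acts H h)"
proof -
  have "acts H h = (\<lambda>a. h @ [a]) -` H" by (auto simp: acts_def)
  then show ?thesis using finite_vimageI[OF fin, of "\<lambda>a. h @ [a]"] by (simp add: inj_def)
qed

lemma step_in: "z \<in> H \<Longrightarrow> k < length z \<Longrightarrow> take k z @ [z!k] \<in> H"
  by (metis take_Suc_conv_app_nth take_in)

lemma step_acts: "z \<in> H \<Longrightarrow> k < length z \<Longrightarrow> z!k \<in> acts H (take k z)"
  by (simp add: acts_def step_in)

lemma step_inner: "z \<in> H \<Longrightarrow> k < length z \<Longrightarrow> take k z \<in> inner H"
  using step_acts[of z k] take_in[of z k] by (auto simp: inner_def)

lemma H_induct[consumes 1, case_names step]:
  assumes "h \<in> H" "\<And>h. h \<in> H \<Longrightarrow> (\<And>h'. h' \<in> H \<Longrightarrow> length h < length h' \<Longrightarrow> P h') \<Longrightarrow> P h"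
  shows "P h"
  using assms(1)
proof (induction h rule: measure_induct_rule[of "\<lambda>h. card H - length h"])
  case (less h)
  show ?case
  proof (rule assms(2)[OF less.prems])
    fix h' assume "h' \<in> H" "length h < length h'"
    moreover have "length h' < card H" using len_lt[OF \<open>h' \<in> H\<close>] .
    ultimately show "P h'" using less.IH by auto
  qed
qed

lemma pl_cases: "pl h \<noteq> Chance \<Longrightarrow> pl h = P1"
  by (cases "pl h") auto

lemma pre_pre: "prefix (h @ [a]) z \<Longrightarrow> prefix h z" by (auto simp: prefix_def)

definition "L h = {z \<in> leaves H. prefix h z}"
definition "fac \<tau> z k = (if pl (take k z) = Chance then pc (take k z) (z!k) else \<tau> (take k z) (z!k))"
definition "pr \<tau> (h::'a list) z = (\<Prod>k\<in>{length h..<length z}. fac \<tau> z k)"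
definition "fac1 \<tau> h a = (if pl h = Chance then pc h a else \<tau> h a)"
definition "W \<tau> h = (\<Sum>z\<in>L h. pr \<tau> h z * u z)"
definition "one = (\<lambda>(h::'a list) (a::'a). 1::real)"
definition "MR h = Max ((\<lambda>z. pr one h z * u z) ` L h)"
definition "CN h = {h' \<in> chance_nodes H pl. prefix h h'}"
definition "B h = (if CN h = {} then 1 else Max (beta H pl ` CN h))"
definition "nn \<tau> \<longleftrightarrow> (\<forall>h\<in>p1_nodes H pl. \<forall>a\<in>acts H h. \<tau> h a \<ge> 0)"
definition "valid \<tau> \<longleftrightarrow> nn \<tau> \<and> (\<forall>h\<in>p1_nodes H pl. (\<Sum>a\<in>acts H h. \<tau> h a) = 1)"

lemma L_fin: "finite (L h)" using fin by (auto simp: L_def leaves_def)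

lemma L_ne: "h \<in> H \<Longrightarrow> L h \<noteq> {}"
proof (induction h rule: H_induct)
  case (step h)
  show ?case
  proof (cases "acts H h = {}")
    case True then show ?thesis using step by (auto simp: L_def leaves_def)
  next
    case False then obtain a where a: "h @ [a] \<in> H" by (auto simp: acts_def)
    then obtain z where "z \<in> L (h @ [a])" using step(2)[OF a] by auto
    then have "z \<in> L h" by (auto simp: L_def intro: pre_pre)
    then show ?thesis by auto
  qed
qed

lemma L_leaf: assumes "h \<in> leaves H" shows "L h = {h}"
proof -
  { fix z assume z: "z \<in> L h" have "z = h"
    proof (rule ccontr)
      assume ne: "z \<noteq> h"
      from z obtain t where zt: "z = h @ t" "z \<in> H" by (auto simp: L_def prefix_def leaves_def)
      with ne obtain x t' where "t = x # t'" by (cases t) auto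
      with zt have "h @ [x] \<in> H" using prefix_closed[of "h @ [x]" t'] by simp
      then show False using assms by (auto simp: leaves_def acts_def)
    qed }
  then show ?thesis using assms by (auto simp: L_def)
qed

lemma pre_step: "prefix (h @ [a]) z \<Longrightarrow> take (length h) z = h \<and> z ! length h = a \<and> length h < length z"
  by (auto simp: prefix_def)

lemma L_child: assumes "h \<in> inner H" "a \<in> acts H h"
  shows "{z \<in> L h. z ! length h = a} = L (h @ [a])"
proof
  show "L (h @ [a]) \<subseteq> {z \<in> L h. z ! length h = a}"
    by (auto simp: L_def dest: pre_step intro: pre_pre)
next
  show "{z \<in> L h. z ! length h = a} \<subseteq> L (h @ [a])"
  proof
    fix z assume z: "z \<in> {z \<in> L h. z ! length h = a}"
    then obtain t where zt: "z = h @ t" "z \<in> leaves H" by (auto simp: L_def prefix_def)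
    have "z \<noteq> h" using zt assms by (auto simp: leaves_def inner_def)
    then obtain x t' where "t = x # t'" using zt by (cases t) auto
    then show "z \<in> L (h @ [a])" using z zt by (auto simp: L_def prefix_def)
  qed
qed

lemma L_acts: assumes "h \<in> inner H" shows "(\<lambda>z. z ! length h) ` L h \<subseteq> acts H h"
proof
  fix b assume "b \<in> (\<lambda>z. z ! length h) ` L h"
  then obtain z where z: "z \<in> L h" "b = z ! length h" by auto
  then obtain t where zt: "z = h @ t" "z \<in> leaves H" by (auto simp: L_def prefix_def)
  have "z \<noteq> h" using zt assms by (auto simp: leaves_def inner_def)
  then obtain x t' where "t = x # t'" using zt by (cases t) auto
  then show "b \<in> acts H h" using z zt prefix_closed[of "h @ [x]" t'] by (auto simp: acts_def leaves_def)
qed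

lemma pr_split: "prefix (h @ [a]) z \<Longrightarrow> pr \<tau> h z = fac1 \<tau> h a * pr \<tau> (h @ [a]) z"
  using pre_step[of h a z]
  by (simp add: pr_def prod.atLeast_Suc_lessThan fac_def fac1_def)

lemma W_split: assumes "h \<in> inner H"
  shows "W \<tau> h = (\<Sum>a\<in>acts H h. fac1 \<tau> h a * W \<tau> (h @ [a]))"
proof -
  have "W \<tau> h = (\<Sum>a\<in>acts H h. \<Sum>z\<in>{z \<in> L h. z ! length h = a}. pr \<tau> h z * u z)"
    unfolding W_def using sum.group[OF L_fin acts_fin L_acts[OF assms], of "\<lambda>z. pr \<tau> h z * u z"]
    by simp
  also have "\<dots> = (\<Sum>a\<in>acts H h. \<Sum>z\<in>L (h @ [a]). pr \<tau> h z * u z)"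
    by (intro sum.cong refl) (simp add: L_child[OF assms])
  also have "\<dots> = (\<Sum>a\<in>acts H h. \<Sum>z\<in>L (h @ [a]). fac1 \<tau> h a * (pr \<tau> (h @ [a]) z * u z))"
    by (intro sum.cong refl) (auto simp: L_def pr_split)
  also have "\<dots> = (\<Sum>a\<in>acts H h. fac1 \<tau> h a * W \<tau> (h @ [a]))"
    by (simp add: W_def sum_distrib_left)
  finally show ?thesis .
qed

lemma fac_nn: "nn \<tau> \<Longrightarrow> z \<in> H \<Longrightarrow> k < length z \<Longrightarrow> fac \<tau> z k \<ge> 0"
  using step_inner[of z k] step_acts[of z k] pl_cases[of "take k z"]
  by (auto simp: fac_def nn_def chance_nodes_def p1_nodes_def intro: pc_nn)

lemma pr_nn: "nn \<tau> \<Longrightarrow> z \<in> H \<Longrightarrow> pr \<tau> h z \<ge> 0"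
  unfolding pr_def by (intro prod_nonneg) (auto intro: fac_nn)

lemma nn_one: "nn one" by (simp add: nn_def one_def)

lemma MR_nn: assumes "h \<in> H" shows "MR h \<ge> 0"
proof -
  obtain z where z: "z \<in> L h" using L_ne[OF assms] by auto
  then have "z \<in> leaves H" by (simp add: L_def)
  then have "0 \<le> pr one h z * u z" using pr_nn[OF nn_one, of z h] u_nn[of z]
    by (intro mult_nonneg_nonneg) (auto simp: leaves_def)
  also have "\<dots> \<le> MR h" unfolding MR_def using z L_fin by (intro Max_ge) auto
  finally show ?thesis .
qed

lemma MR_child: assumes "h \<in> inner H" "a \<in> acts H h"
  shows "fac1 one h a * MR (h @ [a]) \<le> MR h"
proof -
  have ha: "h @ [a] \<in> H" using assms by (simp add: acts_def)
  have "MR (h @ [a]) \<in> (\<lambda>z. pr one (h @ [a]) z * u z) ` L (h @ [a])"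
    unfolding MR_def using L_fin L_ne[OF ha] by (intro Max_in) auto
  then obtain z where z: "z \<in> L (h @ [a])" "MR (h @ [a]) = pr one (h @ [a]) z * u z" by auto
  then have "fac1 one h a * MR (h @ [a]) = pr one h z * u z"
    using pr_split[of h a z one] by (auto simp: L_def)
  also have "\<dots> \<le> MR h" unfolding MR_def using z L_fin L_child[OF assms] by (intro Max_ge) auto
  finally show ?thesis .
qed

lemma CN_sub: "CN h \<subseteq> H" by (auto simp: CN_def chance_nodes_def inner_def)
lemma CN_fin: "finite (CN h)" using CN_sub fin finite_subset by blast

lemma beta_stable:
  "\<forall>h m. h \<in> H \<longrightarrow> n \<ge> card H - length h \<longrightarrow> m \<ge> card H - length h
     \<longrightarrow> beta_fuel H pl n h = beta_fuel H pl m h"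
proof (induction n)
  case 0 then show ?case using len_lt by fastforce
next
  case (Suc n)
  show ?case
  proof (intro allI impI)
    fix h m assume h: "h \<in> H" "Suc n \<ge> card H - length h" "m \<ge> card H - length h"
    then obtain m' where m: "m = Suc m'" using len_lt[OF h(1)] by (cases m) auto
    have eq: "beta_fuel H pl n h' = beta_fuel H pl m' h'" if "h' \<in> CN (h @ [a])" for a h'
    proof -
      have "h' \<in> H" "length h < length h'" using that CN_sub[of "h @ [a]"]
        by (auto simp: CN_def prefix_def)
      then show ?thesis using Suc.IH h m by auto
    qed
    show "beta_fuel H pl (Suc n) h = beta_fuel H pl m h"
      unfolding m beta_fuel.simps Let_def CN_def[symmetric]
      by (intro sum.cong refl if_cong image_cong arg_cong[where f=Max]) (auto simp: eq)
  qed
qed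

lemma beta_unfold:
  "beta H pl h = (\<Sum>a\<in>acts H h. B (h @ [a]))"
proof -
  obtain n where n: "card H = Suc n" using len_lt[OF root] by (cases "card H") auto
  have eq: "beta_fuel H pl n h' = beta H pl h'" if "h' \<in> CN (h @ [a])" for a h'
  proof -
    have "h' \<in> H" "0 < length h'" using that CN_sub[of "h @ [a]"]
      by (auto simp: CN_def prefix_def)
    moreover have "n \<ge> card H - length h'" using n \<open>0 < length h'\<close> by linarith
    ultimately have "beta_fuel H pl n h' = beta_fuel H pl (card H) h'"
      by (intro beta_stable[of n, rule_format]) auto
    then show ?thesis unfolding beta_def .
  qed
  have "beta H pl h = beta_fuel H pl (Suc n) h" by (simp add: beta_def n)
  also have "\<dots> = (\<Sum>a\<in>acts H h. B (h @ [a]))"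
    unfolding beta_fuel.simps Let_def CN_def[symmetric] B_def
    by (intro sum.cong refl if_cong image_cong arg_cong[where f=Max]) (auto simp: eq)
  finally show ?thesis .
qed

lemma beta_ge1: assumes "h \<in> H" shows "h \<in> chance_nodes H pl \<Longrightarrow> beta H pl h \<ge> 1"
  using assms
proof (induction h rule: H_induct)
  case (step h)
  then obtain a where a: "a \<in> acts H h" by (auto simp: chance_nodes_def inner_def)
  have "B (h @ [a]) \<ge> 1"
  proof (cases "CN (h @ [a]) = {}")
    case True then show ?thesis by (simp add: B_def)
  next
    case False
    then obtain h' where h': "h' \<in> CN (h @ [a])" by auto
    then have "h' \<in> H" "length h < length h'" "h' \<in> chance_nodes H pl" using CN_sub
      by (auto simp: CN_def prefix_def)
    then have "1 \<le> beta H pl h'" using step by auto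
    also have "\<dots> \<le> Max (beta H pl ` CN (h @ [a]))" using h' CN_fin by (intro Max_ge) auto
    finally show ?thesis using False by (simp add: B_def)
  qed
  also have "\<dots> \<le> (\<Sum>a\<in>acts H h. B (h @ [a]))" using a acts_fin by (intro member_le_sum) auto
  finally show ?case by (simp add: beta_unfold)
qed

lemma B_ge1: "B h \<ge> 1"
proof (cases "CN h = {}")
  case False
  then obtain h' where h': "h' \<in> CN h" by auto
  then have "1 \<le> beta H pl h'" using CN_sub beta_ge1 by (auto simp: CN_def)
  also have "\<dots> \<le> Max (beta H pl ` CN h)" using h' CN_fin by (intro Max_ge) auto
  finally show ?thesis using False by (simp add: B_def)
qed (simp add: B_def)

lemma B_mono: "B (h @ [a]) \<le> B h"
proof -
  have sub: "CN (h @ [a]) \<subseteq> CN h" by (auto simp: CN_def intro: pre_pre)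
  show ?thesis
  proof (cases "CN (h @ [a]) = {}")
    case True then show ?thesis using B_ge1[of h] by (simp add: B_def)
  next
    case False
    then have "CN h \<noteq> {}" using sub by auto
    have "Max (beta H pl ` CN (h @ [a])) \<le> Max (beta H pl ` CN h)"
      by (rule Max_mono) (use sub CN_fin False in auto)
    then show ?thesis using False \<open>CN h \<noteq> {}\<close> by (simp add: B_def)
  qed
qed

lemma beta_le_B: "h \<in> chance_nodes H pl \<Longrightarrow> beta H pl h \<le> B h"
proof -
  assume h: "h \<in> chance_nodes H pl"
  then have "h \<in> CN h" by (simp add: CN_def)
  then show ?thesis using CN_fin by (auto simp: B_def intro: Max_ge)
qed

lemma main_claim: assumes v: "valid \<tau>" and h: "h \<in> H"
  shows "W \<tau> h \<le> real (B h) * MR h"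
  using h
proof (induction h rule: H_induct)
  case (step h)
  show ?case
  proof (cases "acts H h = {}")
    case True
    then have lf: "h \<in> leaves H" using step by (simp add: leaves_def)
    have "W \<tau> h = u h" "MR h = u h" by (simp_all add: W_def MR_def L_leaf[OF lf] pr_def one_def)
    then show ?thesis using B_ge1[of h] MR_nn[OF step(1)]
      by (simp add: mult_le_cancel_right1)
  next
    case False
    then have inn: "h \<in> inner H" using step by (simp add: inner_def)
    have ch: "h @ [a] \<in> H" if "a \<in> acts H h" for a using that by (simp add: acts_def)
    have IH: "W \<tau> (h @ [a]) \<le> real (B (h @ [a])) * MR (h @ [a])" if "a \<in> acts H h" for a
      using step(2)[OF ch[OF that]] by simp
    show ?thesis
    proof (cases "pl h = Chance")
      case True
      then have cn: "h \<in> chance_nodes H pl" using inn by (simp add: chance_nodes_def)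
      have "W \<tau> h = (\<Sum>a\<in>acts H h. pc h a * W \<tau> (h @ [a]))"
        using W_split[OF inn] True by (simp add: fac1_def)
      also have "\<dots> \<le> (\<Sum>a\<in>acts H h. real (B (h @ [a])) * (pc h a * MR (h @ [a])))"
      proof (intro sum_mono)
        fix a assume a: "a \<in> acts H h"
        have "pc h a * W \<tau> (h @ [a]) \<le> pc h a * (real (B (h @ [a])) * MR (h @ [a]))"
          using IH[OF a] pc_nn[OF cn a] by (intro mult_left_mono) auto
        then show "pc h a * W \<tau> (h @ [a]) \<le> real (B (h @ [a])) * (pc h a * MR (h @ [a]))"
          by (simp add: algebra_simps)
      qed
      also have "\<dots> \<le> (\<Sum>a\<in>acts H h. real (B (h @ [a])) * MR h)"
      proof (intro sum_mono mult_left_mono)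
        fix a assume a: "a \<in> acts H h"
        show "pc h a * MR (h @ [a]) \<le> MR h" using MR_child[OF inn a] True by (simp add: fac1_def)
      qed simp
      also have "\<dots> = real (beta H pl h) * MR h"
        by (simp add: beta_unfold sum_distrib_right)
      also have "\<dots> \<le> real (B h) * MR h"
        using beta_le_B[OF cn] MR_nn[OF step(1)] by (intro mult_right_mono) auto
      finally show ?thesis .
    next
      case False
      then have p1: "h \<in> p1_nodes H pl" using inn pl_cases by (simp add: p1_nodes_def)
      have "W \<tau> h = (\<Sum>a\<in>acts H h. \<tau> h a * W \<tau> (h @ [a]))"
        using W_split[OF inn] False by (simp add: fac1_def)
      also have "\<dots> \<le> (\<Sum>a\<in>acts H h. \<tau> h a * (real (B h) * MR h))"
      proof (intro sum_mono mult_left_mono)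
        fix a assume a: "a \<in> acts H h"
        have "MR (h @ [a]) \<le> MR h" using MR_child[OF inn a] False by (simp add: fac1_def one_def)
        then have "real (B (h @ [a])) * MR (h @ [a]) \<le> real (B h) * MR h"
          using B_mono[of h a] MR_nn[OF ch[OF a]] by (intro mult_mono) auto
        then show "W \<tau> (h @ [a]) \<le> real (B h) * MR h" using IH[OF a] by linarith
        show "0 \<le> \<tau> h a" using v p1 a by (simp add: valid_def nn_def)
      qed
      also have "\<dots> = real (B h) * MR h"
        using v p1 by (simp add: valid_def sum_distrib_right[symmetric])
      finally show ?thesis .
    qed
  qed
qed

lemma reach_eq: "reach pl I pc \<sigma> z = pr (\<lambda>h a. \<sigma> (I h) a) [] z"
  by (simp add: reach_def pr_def fac_def atLeast0LessThan)

lemma eu_eq: "eu H pl I pc u \<sigma> = W (\<lambda>h a. \<sigma> (I h) a) []"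
  unfolding eu_def W_def L_def
  by (simp, intro sum.cong refl, subst reach_eq, rule refl)

lemma valid_strat: "strat H pl I \<sigma> \<Longrightarrow> valid (\<lambda>h a. \<sigma> (I h) a)"
  by (simp add: strat_def valid_def nn_def)

lemma chi_eq: "chi pl pc z = pr one [] z"
proof -
  have "{k. k < length z \<and> pl (take k z) = Chance} = {k \<in> {0..<length z}. pl (take k z) = Chance}"
    by auto
  then have "chi pl pc z = (\<Prod>k\<in>{k \<in> {0..<length z}. pl (take k z) = Chance}. pc (take k z) (z!k))"
    by (simp add: chi_def)
  also have "\<dots> = pr one [] z"
    unfolding prod.inter_filter[OF finite_atLeastLessThan] by (simp add: pr_def fac_def one_def)
  finally show ?thesis .
qed

lemma MR_root: "MR [] = (MAX z \<in> leaves H. chi pl pc z * u z)"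
  unfolding MR_def L_def
  by (simp, intro arg_cong[where f=Max] image_cong refl, subst chi_eq, rule refl)

lemma B_root: "B [] = max_beta H pl"
  by (simp add: B_def max_beta_def CN_def)

lemma eu_bound: "strat H pl I \<sigma> \<Longrightarrow> eu H pl I pc u \<sigma> \<le> real (max_beta H pl) * (MAX z \<in> leaves H. chi pl pc z * u z)"
  using main_claim[OF valid_strat root] by (simp add: eu_eq MR_root B_root)

lemma eu_nn: assumes "strat H pl I \<sigma>" shows "eu H pl I pc u \<sigma> \<ge> 0"
proof -
  have "0 \<le> W (\<lambda>h a. \<sigma> (I h) a) []" unfolding W_def L_def
    using pr_nn[OF valid_strat[OF assms, unfolded valid_def, THEN conjunct1]] u_nn
    by (intro sum_nonneg mult_nonneg_nonneg) (auto simp: leaves_def)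
  then show ?thesis using eu_eq[of I \<sigma>] by simp
qed

lemma sum_ind: "finite A \<Longrightarrow> a0 \<in> A \<Longrightarrow> (\<Sum>a\<in>A. if a = a0 then 1 else (0::real)) = 1"
  by simp

lemma strat_ex:
  assumes cons: "\<forall>h\<in>p1_nodes H pl. \<forall>h'\<in>p1_nodes H pl. I h = I h' \<longrightarrow> acts H h = acts H h'"
  shows "\<exists>\<sigma>. strat H pl I \<sigma>"
proof -
  define \<sigma> where "\<sigma> i a = (if a = (SOME a. a \<in> acts H (SOME h. h \<in> p1_nodes H pl \<and> I h = i)) then 1 else (0::real))" for i a
  have "strat H pl I \<sigma>" unfolding strat_def
  proof
    fix h assume h: "h \<in> p1_nodes H pl"
    define h0 where "h0 = (SOME h'. h' \<in> p1_nodes H pl \<and> I h' = I h)"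
    have h0: "h0 \<in> p1_nodes H pl \<and> I h0 = I h" unfolding h0_def by (rule someI_ex) (use h in auto)
    have ac: "acts H h0 = acts H h" by (rule cons[rule_format]) (use h0 h in auto)
    have "acts H h \<noteq> {}" using h by (simp add: p1_nodes_def inner_def)
    then have a0: "(SOME a. a \<in> acts H h0) \<in> acts H h" unfolding ac by (rule some_in_eq[THEN iffD2])
    have "\<sigma> (I h) = (\<lambda>a. if a = (SOME a. a \<in> acts H h0) then 1 else 0)"
      by (simp add: \<sigma>_def h0_def fun_eq_iff)
    then show "(\<forall>a\<in>acts H h. 0 \<le> \<sigma> (I h) a) \<and> (\<Sum>a\<in>acts H h. \<sigma> (I h) a) = 1"
      using sum_ind[OF acts_fin a0] by simp
  qed
  then show ?thesis by blast
qed

lemma leaves_ne: "leaves H \<noteq> {}" using L_ne[OF root] by (simp add: L_def)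
lemma leaves_fin: "finite (leaves H)" using fin by (simp add: leaves_def)

lemma opt_ge:
  assumes cons: "\<forall>h\<in>p1_nodes H pl. \<forall>h'\<in>p1_nodes H pl. iset h = iset h' \<longrightarrow> acts H h = acts H h'"
    and noabs: "no_absentmindedness H pl iset"
  shows "\<exists>\<sigma>. strat H pl iset \<sigma> \<and> eu H pl iset pc u \<sigma> \<ge> (MAX z\<in>leaves H. chi pl pc z * u z)"
proof -
  have "(MAX z\<in>leaves H. chi pl pc z * u z) \<in> (\<lambda>z. chi pl pc z * u z) ` leaves H"
    using leaves_ne leaves_fin by (intro Max_in) auto
  then obtain z0 where z0: "z0 \<in> leaves H" "(MAX z\<in>leaves H. chi pl pc z * u z) = chi pl pc z0 * u z0"
    by auto
  have z0H: "z0 \<in> H" using z0 by (simp add: leaves_def)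
  obtain \<sigma>0 where s0: "strat H pl iset \<sigma>0" using strat_ex[OF cons] by blast
  define Pk where "Pk = {k. k < length z0 \<and> pl (take k z0) = P1}"
  define \<sigma> where "\<sigma> i a = (if \<exists>k\<in>Pk. iset (take k z0) = i
      then (if a = z0 ! (SOME k. k \<in> Pk \<and> iset (take k z0) = i) then 1 else 0) else \<sigma>0 i a)" for i a
  have st: "strat H pl iset \<sigma>" unfolding strat_def
  proof
    fix h assume h: "h \<in> p1_nodes H pl"
    show "(\<forall>a\<in>acts H h. 0 \<le> \<sigma> (iset h) a) \<and> (\<Sum>a\<in>acts H h. \<sigma> (iset h) a) = 1"
    proof (cases "\<exists>k\<in>Pk. iset (take k z0) = iset h")
      case True
      define k' where "k' = (SOME k. k \<in> Pk \<and> iset (take k z0) = iset h)"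
      have k': "k' \<in> Pk \<and> iset (take k' z0) = iset h" unfolding k'_def by (rule someI_ex) (use True in auto)
      then have tp: "take k' z0 \<in> p1_nodes H pl" using step_inner[OF z0H] by (auto simp: Pk_def p1_nodes_def)
      have ac: "acts H (take k' z0) = acts H h" using cons[rule_format, OF tp h] k' by simp
      have a0: "z0 ! k' \<in> acts H h" using step_acts[OF z0H] k' ac by (auto simp: Pk_def)
      have "\<sigma> (iset h) = (\<lambda>a. if a = z0 ! k' then 1 else 0)"
        using True by (simp add: \<sigma>_def k'_def fun_eq_iff)
      then show ?thesis using sum_ind[OF acts_fin a0] by simp
    next
      case False
      then have "\<sigma> (iset h) = \<sigma>0 (iset h)" by (simp add: \<sigma>_def fun_eq_iff)
      then show ?thesis using s0 h by (simp add: strat_def)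
    qed
  qed
  have "reach pl iset pc \<sigma> z0 = pr (\<lambda>h a. \<sigma> (iset h) a) [] z0" by (rule reach_eq)
  also have "\<dots> = pr one [] z0"
    unfolding pr_def
  proof (intro prod.cong refl)
    fix k assume k: "k \<in> {length []..<length z0}"
    show "fac (\<lambda>h. \<sigma> (iset h)) z0 k = fac one z0 k"
    proof (cases "pl (take k z0) = Chance")
      case False
      then have kP: "k \<in> Pk" using k pl_cases[OF False] by (simp add: Pk_def)
      define k' where "k' = (SOME k'. k' \<in> Pk \<and> iset (take k' z0) = iset (take k z0))"
      have k': "k' \<in> Pk \<and> iset (take k' z0) = iset (take k z0)" unfolding k'_def by (rule someI_ex) (use kP in auto)
      have "k' = k"
      proof (rule ccontr)
        assume "k' \<noteq> k"
        moreover have "k' < length z0" "k < length z0" "pl (take k' z0) = P1" "pl (take k z0) = P1"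
          using k' kP by (auto simp: Pk_def)
        ultimately have "iset (take k' z0) \<noteq> iset (take k z0)"
          using noabs z0H unfolding no_absentmindedness_def by blast
        then show False using k' by simp
      qed
      then have "\<sigma> (iset (take k z0)) (z0 ! k) = 1" using kP by (auto simp: \<sigma>_def k'_def)
      then show ?thesis using False by (simp add: fac_def one_def)
    qed (simp add: fac_def)
  qed
  finally have r0: "reach pl iset pc \<sigma> z0 = chi pl pc z0" by (simp add: chi_eq)
  have nn: "0 \<le> reach pl iset pc \<sigma> z * u z" if "z \<in> leaves H" for z
    using pr_nn[OF valid_strat[OF st, unfolded valid_def, THEN conjunct1], of z "[]"] u_nn[OF that] that
      reach_eq[of iset \<sigma> z]
    by (simp add: leaves_def)
  have "chi pl pc z0 * u z0 \<le> eu H pl iset pc u \<sigma>"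
    unfolding eu_def r0[symmetric] using z0(1) leaves_fin nn by (intro member_le_sum) auto
  then have "(MAX z\<in>leaves H. chi pl pc z * u z) \<le> eu H pl iset pc u \<sigma>" by (simp only: z0(2))
  then show ?thesis using st by blast
qed

end


theorem proposition8:
  fixes H :: "'a list set" and pl :: "'a list \<Rightarrow> player" and iset :: "'a list \<Rightarrow> 'i"
    and pc :: "'a list \<Rightarrow> 'a \<Rightarrow> real" and u :: "'a list \<Rightarrow> real"
  assumes "wf_game H pl iset pc u"
    and "no_absentmindedness H pl iset"
  shows "VoR_opt H pl iset pc u
           \<le> opt_val H pl (pr1_inf pl iset) pc u / (MAX z \<in> leaves H. chi pl pc z * u z)
       \<and> opt_val H pl (pr1_inf pl iset) pc u / (MAX z \<in> leaves H. chi pl pc z * u z)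
           \<le> real (max_beta H pl)"
proof -
  have w: "finite H" "[] \<in> H" "\<forall>h a. h @ [a] \<in> H \<longrightarrow> h \<in> H"
    "\<forall>h \<in> chance_nodes H pl. (\<forall>a \<in> acts H h. pc h a \<ge> 0) \<and> (\<Sum>a \<in> acts H h. pc h a) = 1"
    "\<forall>z \<in> leaves H. u z \<ge> 0"
    and cons: "\<forall>h\<in>p1_nodes H pl. \<forall>h'\<in>p1_nodes H pl. iset h = iset h' \<longrightarrow> acts H h = acts H h'"
    using assms(1) unfolding wf_game_def by blast+
  interpret gm H pl pc u
  proof
    show "finite H" "[] \<in> H" by (fact w(1), fact w(2))
    show "\<And>h a. h @ [a] \<in> H \<Longrightarrow> h \<in> H" using w(3) by blast
    show "\<And>h a. h \<in> chance_nodes H pl \<Longrightarrow> a \<in> acts H h \<Longrightarrow> pc h a \<ge> 0" using w(4) by blast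
    show "\<And>h. h \<in> chance_nodes H pl \<Longrightarrow> (\<Sum>a\<in>acts H h. pc h a) = 1" using w(4) by blast
    show "\<And>z. z \<in> leaves H \<Longrightarrow> u z \<ge> 0" using w(5) by blast
  qed
  have cons': "\<forall>h\<in>p1_nodes H pl. \<forall>h'\<in>p1_nodes H pl. pr1_inf pl iset h = pr1_inf pl iset h' \<longrightarrow> acts H h = acts H h'"
    using cons unfolding pr1_inf_def prod.inject by blast
  define M where "M = (MAX z \<in> leaves H. chi pl pc z * u z)"
  define bm where "bm = real (max_beta H pl)"
  define V where "V = opt_val H pl iset pc u"
  define V' where "V' = opt_val H pl (pr1_inf pl iset) pc u"
  have M0: "M \<ge> 0" using MR_nn[OF root] MR_root by (simp add: M_def)
  have bm0: "bm \<ge> 0" by (simp add: bm_def)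
  obtain \<sigma>' where s': "strat H pl (pr1_inf pl iset) \<sigma>'" using strat_ex[OF cons'] by blast
  have bdd': "bdd_above (eu H pl (pr1_inf pl iset) pc u ` {\<sigma>. strat H pl (pr1_inf pl iset) \<sigma>})"
    using eu_bound by (intro bdd_aboveI[where M="bm * M"]) (auto simp: bm_def M_def)
  have bdd: "bdd_above (eu H pl iset pc u ` {\<sigma>. strat H pl iset \<sigma>})"
    using eu_bound by (intro bdd_aboveI[where M="bm * M"]) (auto simp: bm_def M_def)
  have V'le: "V' \<le> bm * M" unfolding V'_def opt_val_def
    using s' eu_bound by (intro cSup_least) (auto simp: bm_def M_def)
  have "0 \<le> eu H pl (pr1_inf pl iset) pc u \<sigma>'" using eu_nn[OF s'] .
  also have "\<dots> \<le> V'" unfolding V'_def opt_val_def using s' bdd' by (intro cSup_upper) auto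
  finally have V'0: "0 \<le> V'" .
  obtain \<sigma> where s: "strat H pl iset \<sigma>" and ge: "eu H pl iset pc u \<sigma> \<ge> M"
    using opt_ge[OF cons assms(2)] unfolding M_def by blast
  have VM: "M \<le> V" unfolding V_def opt_val_def using ge s bdd
    by (intro order.trans[OF ge] cSup_upper) auto
  have Vle: "V \<le> bm * M" unfolding V_def opt_val_def
    using s eu_bound by (intro cSup_least) (auto simp: bm_def M_def)
  have "V' / V \<le> V' / M \<and> V' / M \<le> bm"
  proof (cases "M = 0")
    case True
    then have "V = 0" using VM Vle by simp
    then show ?thesis using True bm0 by simp
  next
    case False
    then have Mp: "M > 0" using M0 by simp
    have "V' / V \<le> V' / M" using V'0 Mp VM by (intro divide_left_mono) auto
    moreover have "V' / M \<le> bm" using V'le Mp by (simp add: divide_le_eq)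
    ultimately show ?thesis by simp
  qed
  then show ?thesis by (simp add: VoR_opt_def V_def V'_def M_def bm_def)
qed

end
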